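(* Let $A$ be a set of agents and let $x$ be an agent with $x \notin A$. Suppose $PC(A,\phi)$ holds and all agents are honest (they communicate only truths). Suppose further that for some agent $v_x \in A$ the following two communications take place: $v_x$ communicates to $x$ the fact $PC(A,\phi)$, and $v_x$ communicates to every member of $A$ the fact $K_x\,\phi$. Then $PC(A \cup \{x\},\phi)$ holds.
   Context: The setting is epistemic (temporal) logic over a set of agents. For an agent $x$ and predicate $\phi$, $K_x\,\phi$ means "agent $x$ knows $\phi$"; only truths can be known (if $K_x\,\phi$ then $\phi$). Public certifiability of a fact $\phi$ among a set $A$ of agents is defined by $PC(A,\phi) :\iff \forall x,y \in A,\ K_x K_y\,\phi$. A communication "$v \to B : \psi$" means agent $v$ tells the fact $\psi$ to the agents in $B$; since agents are honest, a recipient of such a communication (with delivery assumed, i.e. liveness) comes to know $\psi$. *)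

theory Defs
  imports Main
begin

text \<open>Kripke semantics of knowledge. Worlds (global states at a time point) have type 'w,
  agents type 'a; R a is agent a's indistinguishability relation. Predicates are
  world-dependent propositions.\<close>

definition K :: "('a \<Rightarrow> 'w \<Rightarrow> 'w \<Rightarrow> bool) \<Rightarrow> 'a \<Rightarrow> ('w \<Rightarrow> bool) \<Rightarrow> 'w \<Rightarrow> bool" where
  "K R x \<phi> = (\<lambda>w. \<forall>w'. R x w w' \<longrightarrow> \<phi> w')"

definition PC :: "('a \<Rightarrow> 'w \<Rightarrow> 'w \<Rightarrow> bool) \<Rightarrow> 'a set \<Rightarrow> ('w \<Rightarrow> bool) \<Rightarrow> 'w \<Rightarrow> bool" where
  "PC R A \<phi> = (\<lambda>w. \<forall>x\<in>A. \<forall>y\<in>A. K R x (K R y \<phi>) w)"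

text \<open>Effect of the communication v \<rightarrow> B : \<psi> (evaluated after it took place):
  honesty -- the sender only tells what it knows (hence a truth);
  liveness -- every recipient comes to know \<psi>.\<close>

definition comm :: "('a \<Rightarrow> 'w \<Rightarrow> 'w \<Rightarrow> bool) \<Rightarrow> 'a \<Rightarrow> 'a set \<Rightarrow> ('w \<Rightarrow> bool) \<Rightarrow> 'w \<Rightarrow> bool" where
  "comm R v B \<psi> w = (K R v \<psi> w \<and> (\<forall>b\<in>B. K R b \<psi> w))"

end

theory Submission
  imports Defs
begin

theorem lemma1:
  fixes R :: "'a \<Rightarrow> 'w \<Rightarrow> 'w \<Rightarrow> bool" and A :: "'a set" and x v :: 'a
    and \<phi> :: "'w \<Rightarrow> bool" and w :: 'w
  assumes S5: "\<And>a. equivp (R a)"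
    and "x \<notin> A"
    and "PC R A \<phi> w"
    and "v \<in> A"
    and "comm R v {x} (PC R A \<phi>) w"
    and "comm R v A (K R x \<phi>) w"
  shows "PC R (A \<union> {x}) \<phi> w"
proof -
  have refl: "\<And>a u. R a u u" using S5 by (meson equivp_reflp)
  have trans: "\<And>a u u' u''. R a u u' \<Longrightarrow> R a u' u'' \<Longrightarrow> R a u u''"
    using S5 by (meson equivp_transp)
  have kx: "\<And>u. R x w u \<Longrightarrow> PC R A \<phi> u" using assms(5) by (simp add: comm_def K_def)
  have ka: "\<And>a. a \<in> A \<Longrightarrow> K R a (K R x \<phi>) w" using assms(6) by (simp add: comm_def)
  have pcphi: "\<And>u. PC R A \<phi> u \<Longrightarrow> \<phi> u"
    using assms(4) refl by (simp add: PC_def K_def) blast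
  have pcK: "\<And>u b. PC R A \<phi> u \<Longrightarrow> b \<in> A \<Longrightarrow> K R b \<phi> u"
    using refl by (simp add: PC_def K_def)
  show ?thesis
    unfolding PC_def
  proof (intro allI ballI)
    fix a b assume a: "a \<in> A \<union> {x}" and b: "b \<in> A \<union> {x}"
    show "K R a (K R b \<phi>) w"
    proof (cases "a = x")
      case True
      show ?thesis
      proof (cases "b = x")
        case True
        then show ?thesis using \<open>a = x\<close> kx pcphi trans by (simp add: K_def)
      next
        case False
        then have "b \<in> A" using b by simp
        then show ?thesis using \<open>a = x\<close> kx pcK by (simp add: K_def) blast
      qed
    next
      case False
      then have "a \<in> A" using a by simp
      show ?thesis
      proof (cases "b = x")
        case True then show ?thesis using ka \<open>a \<in> A\<close> by simp
      next
        case False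
        then have "b \<in> A" using b by simp
        then show ?thesis using assms(3) \<open>a \<in> A\<close> by (simp add: PC_def)
      qed
    qed
  qed
qed

end
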